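(* Let $n\ge 2$, $\theta_t,\theta_1,\theta_0,\kappa_1,\ldots,\kappa_{2n}\in\mathbb{C}$ with $n\theta_t+n\theta_1+\theta_0+\sum_{i=1}^{2n}\kappa_i=0$. Let $B_\xi=[b^{(\xi)}_{i,j}]$, $C_\xi=[c^{(\xi)}_{i,j}]$ ($\xi=t,1$) be $n\times n$ matrices, $t$ a nonzero parameter, and put $$\widetilde A_\xi=\begin{bmatrix}I_n\\ B_\xi\end{bmatrix}\begin{bmatrix}\theta_\xi I_n-C_\xi B_\xi,& C_\xi\end{bmatrix}\quad(\xi=t,1).$$ Suppose there are $2n\times2n$ matrices $\widetilde A_0$, zero outside its first row and with $(1,1)$-entry $\theta_0$, and $\widetilde A_\infty$, with diagonal $\kappa_1,\dots,\kappa_{2n}$ and zero outside its diagonal and first column, such that $\widetilde A_t+\widetilde A_1+\widetilde A_0+\widetilde A_\infty=0$. For $i=1,\dots,n$ define $$\mu_i=(-1)^{n-i}t^{-1}\frac{\Delta^{1,i+1,\ldots,n}_{i,i+1,\ldots,n}(C_1)}{\Delta^{i+1,\ldots,n}_{i+1,\ldots,n}(C_t)}\sum_{k=1}^{i}\frac{\Delta^{i,i+1,\ldots,n}_{k,i+1,\ldots,n}(C_t)}{\Delta^{i,\ldots,n}_{i,\ldots,n}(C_t)}\,b^{(t)}_{k,1},\qquad \lambda_i=(-1)^{n-i+1}t\,\frac{\Delta^{1,i+1,\ldots,n}_{i,i+1,\ldots,n}(C_t)}{\Delta^{1,i+1,\ldots,n}_{i,i+1,\ldots,n}(C_1)},$$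 and let $\beta_1=-\kappa_{n+1}$, $\beta_i=-\theta_t-\theta_1-\kappa_i-\kappa_{n+i}$ ($i=2,\dots,n$). Let $E_1=\operatorname{diag}[1,0,\ldots,0]$ and $E_{2n}=\operatorname{diag}[0,1,\ldots,1]$ ($n\times n$). Then $$\operatorname{tr}E_1C_tB_t=-\sum_{i=1}^n\lambda_i\mu_i,\qquad \operatorname{tr}E_1C_1B_t=t\sum_{i=1}^n\mu_i,\qquad \operatorname{tr}E_1C_tB_1=-\frac1t\sum_{i=1}^n\lambda_i(\lambda_i\mu_i+\beta_i),$$ $$\operatorname{tr}E_1C_1(B_t-B_1)E_{2n}C_tB_t=t\sum_{i=1}^n\mu_i\Big\{-\sum_{j=1}^{i-1}(\lambda_j\mu_j+\beta_j)-\beta_i-\kappa_{n+i}+\sum_{j=i+1}^n\lambda_j\mu_j\Big\},$$ $$\operatorname{tr}E_1C_t(B_t-B_1)E_{2n}C_tB_1=-\frac1t\sum_{i=1}^n\lambda_i(\lambda_i\mu_i+\beta_i)\Big\{\sum_{j=1}^{i-1}\lambda_j\mu_j-\beta_i-\kappa_{n+i}-\sum_{j=i+1}^n(\lambda_j\mu_j+\beta_j)\Big\}.$$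
   Context: $\Delta^{i_1,\ldots,i_r}_{j_1,\ldots,j_r}(A)$ denotes the minor determinant of a matrix $A$ formed from rows $i_1,\dots,i_r$ and columns $j_1,\dots,j_r$ (in this order); a minor with empty index sets is $1$. All denominators are assumed nonzero. The matrices $\widetilde A_t,\widetilde A_1,\widetilde A_0,\widetilde A_\infty$ are the (gauge-normalized) residue matrices at $x=t,1,0,\infty$ of a $2n\times 2n$ Fuchsian system $\partial_xY=(\widetilde A_t/(x-t)+\widetilde A_1/(x-1)+\widetilde A_0/x)Y$ of spectral type $\{(n,n),(n,n),(2n-1,1),(1^{2n})\}$. *)

theory Defs
  imports "Jordan_Normal_Form.Determinant"
begin

definition mtrace :: "'a::comm_ring_1 mat \<Rightarrow> 'a" where
  "mtrace A = (\<Sum>i<dim_row A. A $$ (i,i))"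

text \<open>Minor determinant with rows rs and columns cs, given as lists of
  1-based indices (in this order), as in the paper.  Empty index lists give 1.\<close>
definition minor :: "'a::comm_ring_1 mat \<Rightarrow> nat list \<Rightarrow> nat list \<Rightarrow> 'a" where
  "minor A rs cs = det (mat (length rs) (length cs) (\<lambda>(a,b). A $$ (rs!a - 1, cs!b - 1)))"

text \<open>Horizontal concatenation [X, Y] of matrices with the same number of rows.\<close>
definition hcat :: "'a::zero mat \<Rightarrow> 'a mat \<Rightarrow> 'a mat" where
  "hcat X Y = four_block_mat X Y (0\<^sub>m 0 (dim_col X)) (0\<^sub>m 0 (dim_col Y))"

definition Atilde :: "nat \<Rightarrow> complex \<Rightarrow> complex mat \<Rightarrow> complex mat \<Rightarrow> complex mat" where
  "Atilde n \<theta> B C = (1\<^sub>m n @\<^sub>r B) * hcat (\<theta> \<cdot>\<^sub>m 1\<^sub>m n - C * B) C"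

definition E1 :: "nat \<Rightarrow> complex mat" where
  "E1 n = mat n n (\<lambda>(i,j). if i = j \<and> i = 0 then 1 else 0)"
definition E2n :: "nat \<Rightarrow> complex mat" where
  "E2n n = mat n n (\<lambda>(i,j). if i = j \<and> i \<noteq> 0 then 1 else 0)"

text \<open>The canonical coordinates mu_i, lambda_i (1-based i); b^{(t)}_{k,1} = Bt $$ (k-1,0).\<close>
definition mu :: "nat \<Rightarrow> complex \<Rightarrow> complex mat \<Rightarrow> complex mat \<Rightarrow> complex mat \<Rightarrow> nat \<Rightarrow> complex" where
  "mu n t Bt Ct C1 i = (-1)^(n-i) * inverse t
     * minor C1 (1 # [i+1..<n+1]) [i..<n+1] / minor Ct [i+1..<n+1] [i+1..<n+1]
     * (\<Sum>k=1..i. minor Ct [i..<n+1] (k # [i+1..<n+1]) / minor Ct [i..<n+1] [i..<n+1]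
                    * Bt $$ (k-1, 0))"

definition lam :: "nat \<Rightarrow> complex \<Rightarrow> complex mat \<Rightarrow> complex mat \<Rightarrow> nat \<Rightarrow> complex" where
  "lam n t Ct C1 i = (-1)^(n-i+1) * t
     * minor Ct (1 # [i+1..<n+1]) [i..<n+1] / minor C1 (1 # [i+1..<n+1]) [i..<n+1]"

end

theory Submission
  imports Defs
begin


lemma Atilde_entry:
  assumes B: "B \<in> carrier_mat n n" and C: "C \<in> carrier_mat n n"
    and i: "i < 2*n" and j: "j < 2*n"
  shows "Atilde n \<theta> B C $$ (i,j) =
    (if i < n then (if j < n then (\<theta> \<cdot>\<^sub>m 1\<^sub>m n - C * B) $$ (i,j) else C $$ (i, j - n))
     else (if j < n then (B * (\<theta> \<cdot>\<^sub>m 1\<^sub>m n - C * B)) $$ (i-n,j) else (B * C) $$ (i - n, j - n)))"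
proof -
  let ?X = "\<theta> \<cdot>\<^sub>m 1\<^sub>m n - C * B"
  have X: "?X \<in> carrier_mat n n" using B C by auto
  have "Atilde n \<theta> B C = four_block_mat (1\<^sub>m n) (0\<^sub>m n 0) B (0\<^sub>m n 0) * four_block_mat ?X C (0\<^sub>m 0 n) (0\<^sub>m 0 n)"
    unfolding Atilde_def hcat_def append_rows_def using B C X by simp
  also have "\<dots> = four_block_mat (1\<^sub>m n * ?X + 0\<^sub>m n 0 * 0\<^sub>m 0 n) (1\<^sub>m n * C + 0\<^sub>m n 0 * 0\<^sub>m 0 n)
       (B * ?X + 0\<^sub>m n 0 * 0\<^sub>m 0 n) (B * C + 0\<^sub>m n 0 * 0\<^sub>m 0 n)"
    by (rule mult_four_block_mat, insert B C X, auto)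
  finally have eq: "Atilde n \<theta> B C = \<dots>" .
  show ?thesis unfolding eq using i j B C X by (auto simp: mult_2)
qed




lemma Atilde_carrier: assumes B: "B \<in> carrier_mat n n" and C: "C \<in> carrier_mat n n"
  shows "Atilde n \<theta> B C \<in> carrier_mat (2*n) (2*n)"
proof -
  have "1\<^sub>m n @\<^sub>r B \<in> carrier_mat (n+n) n" using B by auto
  moreover have "hcat (\<theta> \<cdot>\<^sub>m 1\<^sub>m n - C * B) C \<in> carrier_mat (n+0) (n+n)"
    unfolding hcat_def using B C by (intro four_block_carrier_mat) auto
  ultimately show ?thesis unfolding Atilde_def by (simp add: mult_2)
qed

lemma constraints:
  fixes n :: nat and \<theta>t \<theta>1 :: complex and \<kappa> :: "nat \<Rightarrow> complex"
    and Bt Ct B1 C1 A0 Ainf :: "complex mat"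
  assumes dims: "Bt \<in> carrier_mat n n" "Ct \<in> carrier_mat n n"
              "B1 \<in> carrier_mat n n" "C1 \<in> carrier_mat n n"
    and A0: "A0 \<in> carrier_mat (2*n) (2*n)"
            "\<And>i j. i < 2*n \<Longrightarrow> j < 2*n \<Longrightarrow> i \<noteq> 0 \<Longrightarrow> A0 $$ (i,j) = 0"
    and Ainf: "Ainf \<in> carrier_mat (2*n) (2*n)"
            "\<And>i. i < 2*n \<Longrightarrow> Ainf $$ (i,i) = \<kappa> (i+1)"
            "\<And>i j. i < 2*n \<Longrightarrow> j < 2*n \<Longrightarrow> i \<noteq> j \<Longrightarrow> j \<noteq> 0 \<Longrightarrow> Ainf $$ (i,j) = 0"
    and sum0: "Atilde n \<theta>t Bt Ct + Atilde n \<theta>1 B1 C1 + A0 + Ainf = 0\<^sub>m (2*n) (2*n)"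
  shows "\<And>i j. 0 < i \<Longrightarrow> i < n \<Longrightarrow> j < n \<Longrightarrow> C1 $$ (i,j) = - Ct $$ (i,j)"
    and "\<And>i j. i < n \<Longrightarrow> j < n \<Longrightarrow> (Bt * Ct + B1 * C1) $$ (i,j) = (if i = j then - \<kappa> (n+i+1) else 0)"
    and "\<And>i j. 0 < i \<Longrightarrow> i < n \<Longrightarrow> 0 < j \<Longrightarrow> j < n \<Longrightarrow>
           (Ct * Bt + C1 * B1) $$ (i,j) = (if i = j then \<theta>t + \<theta>1 + \<kappa> (i+1) else 0)"
proof -
  have At: "Atilde n \<theta>t Bt Ct \<in> carrier_mat (2*n) (2*n)" and A1: "Atilde n \<theta>1 B1 C1 \<in> carrier_mat (2*n) (2*n)"
    using Atilde_carrier dims by auto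
  have E: "Atilde n \<theta>t Bt Ct $$ (i,j) + Atilde n \<theta>1 B1 C1 $$ (i,j) + A0 $$ (i,j) + Ainf $$ (i,j) = 0"
    if "i < 2*n" "j < 2*n" for i j
  proof -
    have "(Atilde n \<theta>t Bt Ct + Atilde n \<theta>1 B1 C1 + A0 + Ainf) $$ (i,j) = 0"
      unfolding sum0 using that by simp
    thus ?thesis using that At A1 A0(1) Ainf(1) by (simp add: add.assoc)
  qed
  show "C1 $$ (i,j) = - Ct $$ (i,j)" if "0 < i" "i < n" "j < n" for i j
  proof -
    have "i < 2*n" "n + j < 2*n" using that by auto
    from E[OF this] show ?thesis
      using that A0(2)[of i "n+j"] Ainf(3)[of i "n+j"]
      by (simp add: Atilde_entry[OF dims(1,2)] Atilde_entry[OF dims(3,4)] add_eq_0_iff)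
  qed
  show "(Bt * Ct + B1 * C1) $$ (i,j) = (if i = j then - \<kappa> (n+i+1) else 0)" if "i < n" "j < n" for i j
  proof -
    have "n + i < 2*n" "n + j < 2*n" using that by auto
    from E[OF this] show ?thesis
      using that A0(2)[of "n+i" "n+j"] Ainf(3)[of "n+i" "n+j"] Ainf(2)[of "n+i"] dims
      by (auto simp add: Atilde_entry[OF dims(1,2)] Atilde_entry[OF dims(3,4)] add_eq_0_iff
         algebra_simps; metis add.commute add.left_commute add_eq_0_iff neg_eq_iff_add_eq_0 add.assoc)
  qed
  show "(Ct * Bt + C1 * B1) $$ (i,j) = (if i = j then \<theta>t + \<theta>1 + \<kappa> (i+1) else 0)"
    if "0 < i" "i < n" "0 < j" "j < n" for i j
  proof -
    have "i < 2*n" "j < 2*n" using that by auto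
    from E[OF this] show ?thesis
      using that A0(2)[of "i" "j"] Ainf(3)[of "i" "j"] Ainf(2)[of "i"] dims
      by (auto simp add: Atilde_entry[OF dims(1,2)] Atilde_entry[OF dims(3,4)] add_eq_0_iff
         algebra_simps; metis add.commute add.left_commute add_eq_0_iff neg_eq_iff_add_eq_0 add.assoc)
  qed
qed




lemma sum_one:
  assumes "finite A" "i \<in> A" "\<And>k. k \<in> A \<Longrightarrow> k \<noteq> i \<Longrightarrow> f k = 0"
  shows "sum f A = f i"
proof -
  have "sum f A = f i + sum f (A - {i})" using assms by (simp add: sum.remove)
  also have "sum f (A - {i}) = 0" using assms by (intro sum.neutral) auto
  finally show ?thesis by simp
qed

lemma mult_entry:
  assumes "A \<in> carrier_mat n m" "B \<in> carrier_mat m k" "i < n" "j < k"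
  shows "(A * B) $$ (i,j) = (\<Sum>l<m. A $$ (i,l) * B $$ (l,j))"
  using assms by (simp add: scalar_prod_def atLeast0LessThan)

definition sm :: "'a mat \<Rightarrow> nat list \<Rightarrow> nat list \<Rightarrow> 'a mat" where
  "sm A rs cs = mat (length rs) (length cs) (\<lambda>(a,b). A $$ (rs!a, cs!b))"

lemma sm_carrier[simp]: "sm A rs cs \<in> carrier_mat (length rs) (length cs)"
  unfolding sm_def by simp
lemma sm_dims[simp]: "dim_row (sm A rs cs) = length rs" "dim_col (sm A rs cs) = length cs"
  unfolding sm_def by simp_all
lemma sm_index[simp]: "a < length rs \<Longrightarrow> b < length cs \<Longrightarrow> sm A rs cs $$ (a,b) = A $$ (rs!a, cs!b)"
  unfolding sm_def by simp

lemma minor_sm: "minor A rs cs = det (sm A (map (\<lambda>x. x - 1) rs) (map (\<lambda>x. x - 1) cs))"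
  unfolding minor_def sm_def by (intro arg_cong[of _ _ det] eq_matI) auto

lemma sm_mult:
  assumes A: "A \<in> carrier_mat n n" and B: "B \<in> carrier_mat n n"
    and ks: "distinct ks" "set ks \<subseteq> {..<n}"
    and rs: "set rs \<subseteq> {..<n}" and cs: "set cs \<subseteq> {..<n}"
    and z: "\<And>r c k. r \<in> set rs \<Longrightarrow> c \<in> set cs \<Longrightarrow> k < n \<Longrightarrow> k \<notin> set ks \<Longrightarrow> A $$ (r,k) * B $$ (k,c) = 0"
  shows "sm (A * B) rs cs = sm A rs ks * sm B ks cs"
proof (rule eq_matI)
  fix a b assume a: "a < dim_row (sm A rs ks * sm B ks cs)" and b: "b < dim_col (sm A rs ks * sm B ks cs)"
  hence a': "a < length rs" "b < length cs" by auto
  hence ra: "rs!a < n" "cs!b < n" using rs cs nth_mem by blast+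
  have "sm (A*B) rs cs $$ (a,b) = (\<Sum>k<n. A $$ (rs!a,k) * B $$ (k, cs!b))"
    using a' mult_entry[OF A B ra] by simp
  also have "\<dots> = (\<Sum>k\<in>set ks. A $$ (rs!a,k) * B $$ (k, cs!b))"
    by (rule sum.mono_neutral_right, insert ks z a' nth_mem, auto)
  also have "\<dots> = (\<Sum>m<length ks. A $$ (rs!a, ks!m) * B $$ (ks!m, cs!b))"
    by (rule sum.reindex_bij_betw[symmetric], rule bij_betw_nth[OF ks(1)], auto)
  also have "\<dots> = (sm A rs ks * sm B ks cs) $$ (a,b)"
    using a' by (subst mult_entry[of _ "length rs" "length ks" _ "length cs"], auto)
  finally show "sm (A * B) rs cs $$ (a, b) = (sm A rs ks * sm B ks cs) $$ (a, b)" .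
qed auto

lemma upper_solve:
  assumes G: "G \<in> carrier_mat n n" and Gu: "\<And>i j. j < i \<Longrightarrow> i < n \<Longrightarrow> G $$ (i,j) = 0"
    and Gd: "\<And>i. a \<le> i \<Longrightarrow> i < n \<Longrightarrow> G $$ (i,i) \<noteq> 0"
    and V: "V \<in> carrier_mat n n"
    and h: "\<And>i j. a \<le> i \<Longrightarrow> i < n \<Longrightarrow> j < i \<Longrightarrow> (G * V) $$ (i,j) = 0"
  shows "a \<le> i \<Longrightarrow> i < n \<Longrightarrow> j < i \<Longrightarrow> (V $$ (i,j) :: 'a :: idom) = 0"
proof (induct "n - i" arbitrary: i j rule: less_induct)
  case (less i)
  have "(G * V) $$ (i,j) = (\<Sum>k<n. G $$ (i,k) * V $$ (k,j))"
    using less by (intro mult_entry[OF G V]) auto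
  also have "\<dots> = G $$ (i,i) * V $$ (i,j)"
  proof (rule sum_one)
    fix k assume k: "k \<in> {..<n}" "k \<noteq> i"
    show "G $$ (i,k) * V $$ (k,j) = 0"
    proof (cases "k < i")
      case True thus ?thesis using Gu less k by simp
    next
      case False
      hence "V $$ (k,j) = 0" using less k by (intro less(1)) auto
      thus ?thesis by simp
    qed
  qed (insert less, auto)
  finally show ?case using h[of i j] Gd[of i] less by simp
qed

lemma upper_diag:
  assumes G: "G \<in> carrier_mat n n" and Gu: "\<And>i j. j < i \<Longrightarrow> i < n \<Longrightarrow> G $$ (i,j) = 0"
    and V: "V \<in> carrier_mat n n" and i: "i < n"
    and Vl: "\<And>k. i < k \<Longrightarrow> k < n \<Longrightarrow> V $$ (k,i) = 0"
  shows "(G * V) $$ (i,i) = G $$ (i,i) * (V $$ (i,i) :: 'a :: comm_ring_1)"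
proof -
  have "(G * V) $$ (i,i) = (\<Sum>k<n. G $$ (i,k) * V $$ (k,i))"
    using i by (intro mult_entry[OF G V]) auto
  also have "\<dots> = G $$ (i,i) * V $$ (i,i)"
    by (rule sum_one, insert Gu Vl i, auto simp: nat_neq_iff)
  finally show ?thesis .
qed




definition AI :: "complex mat \<Rightarrow> nat \<Rightarrow> nat \<Rightarrow> complex mat" where
  "AI C n i = sm C [i..<n] [i..<n]"

definition Lam :: "complex mat \<Rightarrow> nat \<Rightarrow> complex mat" where
  "Lam C n = mat n n (\<lambda>(i,k). det (sm C [i..<n] (k # [Suc i..<n])) / det (AI C n i))"

definition Gm :: "complex mat \<Rightarrow> nat \<Rightarrow> complex mat" where
  "Gm C n = mat n n (\<lambda>(i,j). if i \<le> j then adj_mat (AI C n i) $$ (0, j - i) / det (AI C n i) else 0)"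

lemma cons_upt_nth: "i < n \<Longrightarrow> m < n - i \<Longrightarrow> (k # [Suc i..<n]) ! m = (if m = 0 then k else i + m)"
  by (cases m) auto

lemma Lam_cramer:
  assumes C: "C \<in> carrier_mat n n" and i: "i < n" and k: "k < n"
    and d: "det (AI C n i) \<noteq> 0"
  shows "Lam C n $$ (i,k) = (\<Sum>m<n-i. adj_mat (AI C n i) $$ (0,m) * C $$ (i+m,k)) / det (AI C n i)"
proof -
  let ?A = "AI C n i" let ?d = "det ?A" let ?s = "vec (n-i) (\<lambda>m. C $$ (i+m, k))"
  let ?x = "(1 / ?d) \<cdot>\<^sub>v (adj_mat ?A *\<^sub>v ?s)"
  have A: "?A \<in> carrier_mat (n-i) (n-i)" unfolding AI_def using sm_carrier[of C "[i..<n]" "[i..<n]"] by simp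
  have adj: "adj_mat ?A \<in> carrier_mat (n-i) (n-i)" "?A * adj_mat ?A = ?d \<cdot>\<^sub>m 1\<^sub>m (n-i)"
    using adj_mat[OF A] by auto
  have s: "?s \<in> carrier_vec (n-i)" by simp
  have x: "?x \<in> carrier_vec (n-i)" using adj by simp
  have Ax: "?A *\<^sub>v ?x = ?s"
  proof -
    have "?A *\<^sub>v ?x = (1 / ?d) \<cdot>\<^sub>v (?A *\<^sub>v (adj_mat ?A *\<^sub>v ?s))"
      using A adj s by (simp add: mult_mat_vec)
    also have "?A *\<^sub>v (adj_mat ?A *\<^sub>v ?s) = (?A * adj_mat ?A) *\<^sub>v ?s"
      using assoc_mult_mat_vec[OF A adj(1) s] by simp
    also have "\<dots> = ?d \<cdot>\<^sub>v ?s" unfolding adj(2) using s by auto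
    finally show ?thesis using d s by (auto simp: smult_smult_assoc)
  qed
  have rc: "replace_col ?A ?s 0 = sm C [i..<n] (k # [Suc i..<n])"
    by (rule eq_matI, insert i, auto simp: replace_col_def AI_def cons_upt_nth)
  have "det (sm C [i..<n] (k # [Suc i..<n])) = ?x $ 0 * ?d"
    using cramer_lemma_mat[OF A x, of 0] i unfolding Ax rc by simp
  hence "Lam C n $$ (i,k) = ?x $ 0" unfolding Lam_def using i k d by simp
  also have "\<dots> = (\<Sum>m<n-i. adj_mat ?A $$ (0,m) * C $$ (i+m,k)) / ?d"
    using i adj by (simp add: scalar_prod_def atLeast0LessThan sum_divide_distrib)
  finally show ?thesis .
qed




lemma sum_shift: "i \<le> n \<Longrightarrow> (\<Sum>j\<in>{i..<n}. (f :: nat \<Rightarrow> 'a::comm_monoid_add) j) = (\<Sum>m<n-i. f (i+m))"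
  using sum.shift_bounds_nat_ivl[of f 0 i "n-i"] by (simp add: atLeast0LessThan add.commute)

lemma unit_lower_det:
  assumes M: "M \<in> carrier_mat m m" and up: "\<And>a b. a < b \<Longrightarrow> b < m \<Longrightarrow> M $$ (a,b) = 0"
    and dg: "\<And>a. a < m \<Longrightarrow> M $$ (a,a) = 1"
  shows "det M = (1::'a::comm_ring_1)"
proof -
  have "det M = prod_list (diag_mat M)" by (rule det_lower_triangular[OF up M])
  also have "diag_mat M = replicate m 1"
    using M dg by (intro nth_equalityI) (auto simp: diag_mat_def)
  finally show ?thesis by simp
qed

lemma Lam_eq_Gm:
  assumes C: "C \<in> carrier_mat n n" and d: "\<And>i. i < n \<Longrightarrow> det (AI C n i) \<noteq> 0"
  shows "Lam C n = Gm C n * C"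
proof (rule eq_matI)
  fix i k assume "i < dim_row (Gm C n * C)" "k < dim_col (Gm C n * C)"
  hence i: "i < n" and k: "k < n" using C by (auto simp: Gm_def)
  have G: "Gm C n \<in> carrier_mat n n" unfolding Gm_def by simp
  have "(Gm C n * C) $$ (i,k) = (\<Sum>j<n. Gm C n $$ (i,j) * C $$ (j,k))"
    by (rule mult_entry[OF G C i k])
  also have "\<dots> = (\<Sum>j\<in>{i..<n}. Gm C n $$ (i,j) * C $$ (j,k))"
    by (rule sum.mono_neutral_right, insert i, auto simp: Gm_def)
  also have "\<dots> = (\<Sum>m<n-i. Gm C n $$ (i,i+m) * C $$ (i+m,k))"
    using i by (simp add: sum_shift)
  also have "\<dots> = (\<Sum>m<n-i. adj_mat (AI C n i) $$ (0,m) * C $$ (i+m,k)) / det (AI C n i)"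
    by (simp add: sum_divide_distrib Gm_def)
  also have "\<dots> = Lam C n $$ (i,k)" using Lam_cramer[OF C i k d[OF i]] by simp
  finally show "Lam C n $$ (i,k) = (Gm C n * C) $$ (i,k)" by simp
qed (insert C, auto simp: Lam_def Gm_def)

lemma Lam_upper0:
  assumes C: "C \<in> carrier_mat n n" and ik: "i < k" "k < n"
  shows "Lam C n $$ (i,k) = 0"
proof -
  let ?M = "sm C [i..<n] (k # [Suc i..<n])"
  have M: "?M \<in> carrier_mat (n-i) (n-i)" using sm_carrier[of C "[i..<n]" "k # [Suc i..<n]"] ik by (simp add: Suc_diff_Suc)
  have "det ?M = 0"
    by (rule det_identical_columns[OF M, of 0 "k - i"], insert ik, auto simp: cons_upt_nth)
  thus ?thesis using ik unfolding Lam_def by simp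
qed

lemma Lam_diag:
  assumes d: "det (AI C n i) \<noteq> 0" and i: "i < n"
  shows "Lam C n $$ (i,i) = 1"
proof -
  have "i # [Suc i..<n] = [i..<n]" using i by (simp add: upt_conv_Cons)
  thus ?thesis using d i unfolding Lam_def AI_def by simp
qed




lemma UL:
  fixes C :: "complex mat"
  assumes C: "C \<in> carrier_mat n n" and d: "\<And>i. i < n \<Longrightarrow> det (AI C n i) \<noteq> 0"
  defines "L \<equiv> Lam C n" and "Li \<equiv> adj_mat (Lam C n)" and "V \<equiv> C * adj_mat (Lam C n)"
  shows "L \<in> carrier_mat n n" "Li \<in> carrier_mat n n" "V \<in> carrier_mat n n"
    "L * Li = 1\<^sub>m n" "Li * L = 1\<^sub>m n" "V * L = C"
    "\<And>i j. i < j \<Longrightarrow> j < n \<Longrightarrow> L $$ (i,j) = 0" "\<And>i. i < n \<Longrightarrow> L $$ (i,i) = 1"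
    "\<And>i j. j < i \<Longrightarrow> i < n \<Longrightarrow> V $$ (i,j) = 0" "\<And>i. i < n \<Longrightarrow> V $$ (i,i) \<noteq> 0"
proof -
  show L: "L \<in> carrier_mat n n" unfolding L_def Lam_def by simp
  show Lu: "\<And>i j. i < j \<Longrightarrow> j < n \<Longrightarrow> L $$ (i,j) = 0" unfolding L_def by (rule Lam_upper0[OF C])
  show Ld: "\<And>i. i < n \<Longrightarrow> L $$ (i,i) = 1" unfolding L_def by (rule Lam_diag[OF d])
  have dL: "det L = 1" by (rule unit_lower_det[OF L Lu Ld])
  have one: "(1::complex) \<cdot>\<^sub>m 1\<^sub>m n = 1\<^sub>m n" by (rule eq_matI) auto
  show Li: "Li \<in> carrier_mat n n" unfolding Li_def L_def[symmetric] using adj_mat[OF L] by simp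
  show LLi: "L * Li = 1\<^sub>m n" unfolding Li_def L_def[symmetric] using adj_mat[OF L] dL one by simp
  show LiL: "Li * L = 1\<^sub>m n" unfolding Li_def L_def[symmetric] using adj_mat[OF L] dL one by simp
  show V: "V \<in> carrier_mat n n" unfolding V_def Li_def[symmetric] using C Li by simp
  show VL: "V * L = C" unfolding V_def Li_def[symmetric]
    using assoc_mult_mat[OF C Li L] LiL C by simp
  define G where "G = Gm C n"
  have G: "G \<in> carrier_mat n n" unfolding G_def Gm_def by simp
  have GC: "G * C = L" unfolding G_def L_def using Lam_eq_Gm[OF C d] by simp
  have Gu: "\<And>i j. j < i \<Longrightarrow> i < n \<Longrightarrow> G $$ (i,j) = 0" unfolding G_def Gm_def by simp
  have "det G * det C = 1" using det_mult[OF G C] GC dL by simp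
  hence dG: "det G \<noteq> 0" by auto
  have "det G = prod_list (diag_mat G)"
    by (rule det_upper_triangular[OF _ G], insert G Gu, auto simp: upper_triangular_def)
  with dG have Gd: "\<And>i. i < n \<Longrightarrow> G $$ (i,i) \<noteq> 0"
    using G by (auto simp: prod_list_zero_iff diag_mat_def)
  have GV: "G * V = 1\<^sub>m n" unfolding V_def Li_def[symmetric]
    using assoc_mult_mat[OF G C Li, symmetric] GC LLi by simp
  show Vu: "\<And>i j. j < i \<Longrightarrow> i < n \<Longrightarrow> V $$ (i,j) = 0"
    by (rule upper_solve[OF G Gu Gd V, of 0], insert GV, auto)
  show "\<And>i. i < n \<Longrightarrow> V $$ (i,i) \<noteq> 0"
  proof -
    fix i assume i: "i < n"
    have "(G * V) $$ (i,i) = G $$ (i,i) * V $$ (i,i)"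
      by (rule upper_diag[OF G Gu V i], insert Vu, auto)
    thus "V $$ (i,i) \<noteq> 0" using GV i by auto
  qed
qed




lemma minor_tail:
  fixes C V L :: "complex mat"
  assumes V: "V \<in> carrier_mat n n" and L: "L \<in> carrier_mat n n" and VL: "V * L = C"
    and Lu: "\<And>i j. i < j \<Longrightarrow> j < n \<Longrightarrow> L $$ (i,j) = 0" and Ld: "\<And>i. i < n \<Longrightarrow> L $$ (i,i) = 1"
    and Vu: "\<And>i j. j < i \<Longrightarrow> i < n \<Longrightarrow> V $$ (i,j) = 0"
  shows "det (sm C [s..<n] [s..<n]) = det (sm V [s..<n] [s..<n])"
proof -
  have "sm C [s..<n] [s..<n] = sm V [s..<n] [s..<n] * sm L [s..<n] [s..<n]"
    unfolding VL[symmetric] by (rule sm_mult[OF V L], insert Vu, auto)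
  moreover have "det (sm L [s..<n] [s..<n]) = 1"
    by (rule unit_lower_det[of _ "n-s"], insert Lu Ld, auto)
  moreover have c: "sm V [s..<n] [s..<n] \<in> carrier_mat (n-s) (n-s)" "sm L [s..<n] [s..<n] \<in> carrier_mat (n-s) (n-s)"
    using sm_carrier[of V "[s..<n]" "[s..<n]"] sm_carrier[of L "[s..<n]" "[s..<n]"] by auto
  ultimately show ?thesis using det_mult[OF c] by simp
qed

lemma minor_head:
  fixes Y V L :: "complex mat"
  assumes Y: "Y \<in> carrier_mat n n" and V: "V \<in> carrier_mat n n" and L: "L \<in> carrier_mat n n"
    and Lu: "\<And>i j. i < j \<Longrightarrow> j < n \<Longrightarrow> L $$ (i,j) = 0" and Ld: "\<And>i. i < n \<Longrightarrow> L $$ (i,i) = 1"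
    and Vu: "\<And>i j. j < i \<Longrightarrow> i < n \<Longrightarrow> V $$ (i,j) = 0"
    and i: "i < n"
    and hY: "\<And>r k. i < r \<Longrightarrow> r < n \<Longrightarrow> k < n \<Longrightarrow> Y $$ (r,k) = \<sigma> * V $$ (r,k)"
  shows "det (sm (Y * L) (0 # [Suc i..<n]) [i..<n])
       = Y $$ (0,i) * \<sigma> ^ (n - Suc i) * det (sm V [Suc i..<n] [Suc i..<n])"
proof -
  let ?m = "n - Suc i"
  have e1: "sm (Y * L) (0 # [Suc i..<n]) [i..<n] = sm Y (0 # [Suc i..<n]) [i..<n] * sm L [i..<n] [i..<n]"
    by (rule sm_mult[OF Y L], insert Lu i, auto)
  have dL: "det (sm L [i..<n] [i..<n]) = 1"
    by (rule unit_lower_det[of _ "n-i"], insert Lu Ld, auto)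
  let ?A1 = "mat 1 1 (\<lambda>_. Y $$ (0,i))"
  let ?A2 = "mat 1 ?m (\<lambda>(_,b). Y $$ (0, Suc i + b))"
  let ?A4 = "\<sigma> \<cdot>\<^sub>m sm V [Suc i..<n] [Suc i..<n]"
  have e2: "sm Y (0 # [Suc i..<n]) [i..<n] = four_block_mat ?A1 ?A2 (0\<^sub>m ?m 1) ?A4"
  proof (rule eq_matI)
    fix a b assume a: "a < dim_row (four_block_mat ?A1 ?A2 (0\<^sub>m ?m 1) ?A4)"
      and b: "b < dim_col (four_block_mat ?A1 ?A2 (0\<^sub>m ?m 1) ?A4)"
    hence a': "a < 1 + ?m" "b < 1 + ?m" by auto
    have nn: "1 + ?m = n - i" using i by simp
    show "sm Y (0 # [Suc i..<n]) [i..<n] $$ (a,b) = four_block_mat ?A1 ?A2 (0\<^sub>m ?m 1) ?A4 $$ (a,b)"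
    proof (cases a)
      case 0 thus ?thesis using a' nn by (cases b) auto
    next
      case (Suc a1)
      hence r: "(0 # [Suc i..<n]) ! a = Suc i + a1" "Suc i + a1 < n" using a' by auto
      show ?thesis
      proof (cases b)
        case 0 thus ?thesis using a' nn r Suc hY[of "Suc i + a1" i] Vu[of i "Suc i + a1"] by auto
      next
        case (Suc b1) thus ?thesis using a' nn r \<open>a = Suc a1\<close> hY[of "Suc i + a1" "Suc i + b1"] by auto
      qed
    qed
  qed (insert i, auto)
  have "det (four_block_mat ?A1 ?A2 (0\<^sub>m ?m 1) ?A4) = det ?A1 * det ?A4"
    by (rule det_four_block_mat_lower_left_zero_col, auto)
  also have "det ?A1 = Y $$ (0,i)" by (subst det_single, auto)
  also have "det ?A4 = \<sigma> ^ ?m * det (sm V [Suc i..<n] [Suc i..<n])" by simp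
  finally have "det (sm Y (0 # [Suc i..<n]) [i..<n]) = Y $$ (0,i) * (\<sigma> ^ ?m * det (sm V [Suc i..<n] [Suc i..<n]))"
    using e2 by simp
  moreover have "det (sm (Y * L) (0 # [Suc i..<n]) [i..<n]) = det (sm Y (0 # [Suc i..<n]) [i..<n])"
  proof -
    have c: "sm Y (0 # [Suc i..<n]) [i..<n] \<in> carrier_mat (n-i) (n-i)" "sm L [i..<n] [i..<n] \<in> carrier_mat (n-i) (n-i)"
      using sm_carrier[of Y "0 # [Suc i..<n]" "[i..<n]"] sm_carrier[of L "[i..<n]" "[i..<n]"] i by (auto simp: Suc_diff_Suc)
    show ?thesis unfolding e1 using det_mult[OF c] dL by simp
  qed
  ultimately show ?thesis by simp
qed




lemma tri_swap:
  "(\<Sum>i<n. \<Sum>j\<in>{Suc i..<n}. (f i j :: 'a::comm_monoid_add)) = (\<Sum>j<n. \<Sum>i<j. f i j)"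
proof (induct n)
  case (Suc n)
  have "(\<Sum>i<Suc n. \<Sum>j\<in>{Suc i..<Suc n}. f i j) = (\<Sum>i<n. \<Sum>j\<in>{Suc i..<Suc n}. f i j)"
    by simp
  also have "\<dots> = (\<Sum>i<n. (\<Sum>j\<in>{Suc i..<n}. f i j) + f i n)"
    by (rule sum.cong, auto)
  also have "\<dots> = (\<Sum>j<n. \<Sum>i<j. f i j) + (\<Sum>i<n. f i n)" using Suc by (simp add: sum.distrib)
  finally show ?case by simp
qed simp

lemma final_sums:
  fixes u w p y D :: "nat \<Rightarrow> complex" and Zf :: "nat \<Rightarrow> nat \<Rightarrow> complex"
  assumes Z: "\<And>i j. i < n \<Longrightarrow> j < n \<Longrightarrow> Zf i j = (if j < i then 0 else if j = i then D i else - p i * u j - y i * w j)"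
  shows "(\<Sum>i<n. \<Sum>j<n. w i * Zf i j * p j)
         = (\<Sum>i<n. w i * p i * (- (\<Sum>j<i. w j * y j) + D i - (\<Sum>j\<in>{Suc i..<n}. u j * p j)))"
    and "(\<Sum>i<n. \<Sum>j<n. u i * Zf i j * y j)
         = (\<Sum>i<n. u i * y i * (- (\<Sum>j<i. u j * p j) + D i - (\<Sum>j\<in>{Suc i..<n}. w j * y j)))"
proof -
  have split: "(\<Sum>j<n. a i * Zf i j * b j) = a i * D i * b i + (\<Sum>j\<in>{Suc i..<n}. a i * (- p i * u j - y i * w j) * b j)"
    if i: "i < n" for i and a b :: "nat \<Rightarrow> complex"
  proof -
    have "{..<n} = {..<i} \<union> ({i} \<union> {Suc i..<n})" using i by auto
    hence "(\<Sum>j<n. a i * Zf i j * b j) = (\<Sum>j\<in>{..<i} \<union> ({i} \<union> {Suc i..<n}). a i * Zf i j * b j)"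
      by simp
    also have "\<dots> = (\<Sum>j<i. a i * Zf i j * b j) + (a i * Zf i i * b i
         + (\<Sum>j\<in>{Suc i..<n}. a i * Zf i j * b j))"
      by (subst sum.union_disjoint, simp, simp, force, subst sum.union_disjoint, auto)
    also have "(\<Sum>j<i. a i * Zf i j * b j) = 0" using Z i by simp
    also have "(\<Sum>j\<in>{Suc i..<n}. a i * Zf i j * b j) = (\<Sum>j\<in>{Suc i..<n}. a i * (- p i * u j - y i * w j) * b j)"
      using Z i by (intro sum.cong) auto
    finally show ?thesis using Z i by simp
  qed
  show "(\<Sum>i<n. \<Sum>j<n. w i * Zf i j * p j)
         = (\<Sum>i<n. w i * p i * (- (\<Sum>j<i. w j * y j) + D i - (\<Sum>j\<in>{Suc i..<n}. u j * p j)))"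
  proof -
    have "(\<Sum>i<n. \<Sum>j<n. w i * Zf i j * p j) = (\<Sum>i<n. w i * D i * p i)
       - (\<Sum>i<n. \<Sum>j\<in>{Suc i..<n}. w i * p i * (u j * p j)) - (\<Sum>i<n. \<Sum>j\<in>{Suc i..<n}. w j * p j * (w i * y i))"
    proof -
      have "(\<Sum>i<n. \<Sum>j<n. w i * Zf i j * p j) = (\<Sum>i<n. w i * D i * p i + (\<Sum>j\<in>{Suc i..<n}. w i * (- p i * u j - y i * w j) * p j))"
        by (rule sum.cong, simp, rule split, simp)
      thus ?thesis by (simp add: sum.distrib sum_subtractf sum_negf algebra_simps)
    qed
    also have "(\<Sum>i<n. \<Sum>j\<in>{Suc i..<n}. w j * p j * (w i * y i)) = (\<Sum>j<n. \<Sum>i<j. w j * p j * (w i * y i))"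
      by (rule tri_swap)
    finally show ?thesis by (simp add: sum_distrib_left sum_subtractf sum.distrib algebra_simps)
  qed
  show "(\<Sum>i<n. \<Sum>j<n. u i * Zf i j * y j)
         = (\<Sum>i<n. u i * y i * (- (\<Sum>j<i. u j * p j) + D i - (\<Sum>j\<in>{Suc i..<n}. w j * y j)))"
  proof -
    have "(\<Sum>i<n. \<Sum>j<n. u i * Zf i j * y j) = (\<Sum>i<n. u i * D i * y i)
       - (\<Sum>i<n. \<Sum>j\<in>{Suc i..<n}. u j * y j * (u i * p i)) - (\<Sum>i<n. \<Sum>j\<in>{Suc i..<n}. u i * y i * (w j * y j))"
    proof -
      have "(\<Sum>i<n. \<Sum>j<n. u i * Zf i j * y j) = (\<Sum>i<n. u i * D i * y i + (\<Sum>j\<in>{Suc i..<n}. u i * (- p i * u j - y i * w j) * y j))"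
        by (rule sum.cong, simp, rule split, simp)
      thus ?thesis by (simp add: sum.distrib sum_subtractf sum_negf algebra_simps)
    qed
    also have "(\<Sum>i<n. \<Sum>j\<in>{Suc i..<n}. u j * y j * (u i * p i)) = (\<Sum>j<n. \<Sum>i<j. u j * y j * (u i * p i))"
      by (rule tri_swap)
    finally show ?thesis by (simp add: sum_distrib_left sum_subtractf sum.distrib algebra_simps)
  qed
qed




lemma mult_E2_entry:
  assumes A: "A \<in> carrier_mat n n" and i: "i < n" and j: "j < n"
  shows "(A * E2n n) $$ (i,j) = (if j = 0 then 0 else A $$ (i,j))"
proof -
  have E: "E2n n \<in> carrier_mat n n" unfolding E2n_def by simp
  have "(A * E2n n) $$ (i,j) = (\<Sum>k<n. A $$ (i,k) * E2n n $$ (k,j))" by (rule mult_entry[OF A E i j])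
  also have "\<dots> = A $$ (i,j) * E2n n $$ (j,j)"
    by (rule sum_one, insert j, auto simp: E2n_def)
  finally show ?thesis using j by (simp add: E2n_def)
qed

lemma trace_E1:
  assumes X: "X \<in> carrier_mat n n" and n: "0 < n"
  shows "mtrace (E1 n * X) = X $$ (0,0)"
proof -
  have E: "E1 n \<in> carrier_mat n n" unfolding E1_def by simp
  have row: "(E1 n * X) $$ (i,j) = (if i = 0 then X $$ (0,j) else 0)" if "i < n" "j < n" for i j
  proof -
    have "(E1 n * X) $$ (i,j) = (\<Sum>k<n. E1 n $$ (i,k) * X $$ (k,j))" by (rule mult_entry[OF E X that])
    also have "\<dots> = E1 n $$ (i,i) * X $$ (i,j)"
      by (rule sum_one, insert that, auto simp: E1_def)
    finally show ?thesis using that by (simp add: E1_def)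
  qed
  have "mtrace (E1 n * X) = (\<Sum>i<n. (E1 n * X) $$ (i,i))" unfolding mtrace_def using E X by simp
  also have "\<dots> = (E1 n * X) $$ (0,0)" by (rule sum_one, insert n row, auto)
  finally show ?thesis using row n by simp
qed

lemma mult_n: "A \<in> carrier_mat n n \<Longrightarrow> B \<in> carrier_mat n n \<Longrightarrow> A * B \<in> carrier_mat n n"
  by simp
lemma minus_n: "A \<in> carrier_mat n n \<Longrightarrow> B \<in> carrier_mat n n \<Longrightarrow> A - B \<in> carrier_mat n n"
  by (rule minus_carrier_mat)
lemma massoc: "A \<in> carrier_mat n n \<Longrightarrow> B \<in> carrier_mat n n \<Longrightarrow> C \<in> carrier_mat n n \<Longrightarrow> A * B * C = A * (B * C)"
  by (rule assoc_mult_mat)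

lemma sum_split0: "0 < (n::nat) \<Longrightarrow> (\<Sum>k<n. f k) = f 0 + (\<Sum>k\<in>{1..<n}. (f k :: 'a::comm_monoid_add))"
proof -
  assume n: "0 < n"
  have "{..<n} = insert 0 {1..<n}" using n by (auto simp: not_le)
  thus ?thesis by simp
qed

lemma upt_map2: "map (\<lambda>x. x - 1) [Suc a..<b+1] = [a..<b]"
  by (induct b) auto

lemma s1: "(\<Sum>i=1..n. (f i :: 'a::comm_monoid_add)) = (\<Sum>i<n. f (Suc i))"
  by (simp add: sum.atLeast1_atMost_eq)
lemma s2: "(\<Sum>j=1..<Suc i. (g j :: 'a::comm_monoid_add)) = (\<Sum>j<i. g (Suc j))"
  using sum.shift_bounds_Suc_ivl[of g 0 i] by (simp add: atLeast0LessThan)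
lemma s3: "0 < n \<Longrightarrow> (\<Sum>j=Suc i + 1..n. (g j :: 'a::comm_monoid_add)) = (\<Sum>j\<in>{Suc i..<n}. g (Suc j))"
proof -
  assume "0 < n"
  then obtain m where m: "n = Suc m" by (cases n) auto
  have "(\<Sum>j=Suc i + 1..n. g j) = (\<Sum>j\<in>{Suc (Suc i)..Suc m}. g j)" using m by simp
  also have "\<dots> = (\<Sum>j\<in>{Suc i..m}. g (Suc j))" by (rule sum.shift_bounds_cl_Suc_ivl)
  also have "{Suc i..m} = {Suc i..<n}" using m by auto
  finally show ?thesis .
qed

lemma upt_map: "map (\<lambda>x. x - 1) [a+1..<b+1] = [a..<b]"
  by (induct b) auto

theorem mainTheorem2:
  fixes n :: nat and \<theta>t \<theta>1 \<theta>0 t :: complex and \<kappa> :: "nat \<Rightarrow> complex"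
    and Bt Ct B1 C1 A0 Ainf :: "complex mat"
  assumes n2: "n \<ge> 2"
    and fuchs: "of_nat n * \<theta>t + of_nat n * \<theta>1 + \<theta>0 + (\<Sum>i=1..2*n. \<kappa> i) = 0"
    and dims: "Bt \<in> carrier_mat n n" "Ct \<in> carrier_mat n n"
              "B1 \<in> carrier_mat n n" "C1 \<in> carrier_mat n n"
    and t0: "t \<noteq> 0"
    and A0: "A0 \<in> carrier_mat (2*n) (2*n)"
            "\<And>i j. i < 2*n \<Longrightarrow> j < 2*n \<Longrightarrow> i \<noteq> 0 \<Longrightarrow> A0 $$ (i,j) = 0"
            "A0 $$ (0,0) = \<theta>0"
    and Ainf: "Ainf \<in> carrier_mat (2*n) (2*n)"
            "\<And>i. i < 2*n \<Longrightarrow> Ainf $$ (i,i) = \<kappa> (i+1)"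
            "\<And>i j. i < 2*n \<Longrightarrow> j < 2*n \<Longrightarrow> i \<noteq> j \<Longrightarrow> j \<noteq> 0 \<Longrightarrow> Ainf $$ (i,j) = 0"
    and sum0: "Atilde n \<theta>t Bt Ct + Atilde n \<theta>1 B1 C1 + A0 + Ainf = 0\<^sub>m (2*n) (2*n)"
    and nz: "\<And>i. 1 \<le> i \<Longrightarrow> i \<le> n \<Longrightarrow> minor Ct [i+1..<n+1] [i+1..<n+1] \<noteq> 0"
            "\<And>i. 1 \<le> i \<Longrightarrow> i \<le> n \<Longrightarrow> minor Ct [i..<n+1] [i..<n+1] \<noteq> 0"
            "\<And>i. 1 \<le> i \<Longrightarrow> i \<le> n \<Longrightarrow> minor C1 (1 # [i+1..<n+1]) [i..<n+1] \<noteq> 0"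
  defines "\<mu> \<equiv> mu n t Bt Ct C1"
    and "lm \<equiv> lam n t Ct C1"
    and "\<beta> \<equiv> (\<lambda>i. if i = 1 then - \<kappa> (n+1) else - \<theta>t - \<theta>1 - \<kappa> i - \<kappa> (n+i))"
  shows "(mtrace (E1 n * Ct * Bt) = - (\<Sum>i=1..n. lm i * \<mu> i))
       \<and> (mtrace (E1 n * C1 * Bt) = t * (\<Sum>i=1..n. \<mu> i))
       \<and> (mtrace (E1 n * Ct * B1) = - (1/t) * (\<Sum>i=1..n. lm i * (lm i * \<mu> i + \<beta> i)))
       \<and> (mtrace (E1 n * C1 * (Bt - B1) * E2n n * Ct * Bt)
           = t * (\<Sum>i=1..n. \<mu> i * (- (\<Sum>j=1..<i. lm j * \<mu> j + \<beta> j) - \<beta> i - \<kappa> (n+i)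
                                    + (\<Sum>j=i+1..n. lm j * \<mu> j))))
       \<and> (mtrace (E1 n * Ct * (Bt - B1) * E2n n * Ct * B1)
           = - (1/t) * (\<Sum>i=1..n. lm i * (lm i * \<mu> i + \<beta> i)
                 * ((\<Sum>j=1..<i. lm j * \<mu> j) - \<beta> i - \<kappa> (n+i)
                    - (\<Sum>j=i+1..n. lm j * \<mu> j + \<beta> j))))"
proof -
  have n0: "0 < n" using n2 by simp
  note con = constraints[OF dims A0(1,2) Ainf sum0]
  have dAI: "det (AI Ct n i) \<noteq> 0" if "i < n" for i
    using nz(2)[of "i+1"] that unfolding AI_def minor_sm upt_map by simp
  define L where "L = Lam Ct n"
  define Li where "Li = adj_mat (Lam Ct n)"
  define V where "V = Ct * adj_mat (Lam Ct n)"
  note ul = UL[OF dims(2) dAI, folded L_def Li_def V_def]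
  define W where "W = C1 * Li"
  define Q where "Q = L * Bt"
  define R where "R = L * B1"
  define Z where "Z = L * (Bt - B1) * E2n n * V"
  have L: "L \<in> carrier_mat n n" and Li: "Li \<in> carrier_mat n n" and V: "V \<in> carrier_mat n n"
    using ul by auto
  have W: "W \<in> carrier_mat n n" and Q: "Q \<in> carrier_mat n n" and R: "R \<in> carrier_mat n n"
    and E2: "E2n n \<in> carrier_mat n n" and E1: "E1 n \<in> carrier_mat n n"
    unfolding W_def Q_def R_def E2n_def E1_def using dims L Li by auto
  have Z: "Z \<in> carrier_mat n n" unfolding Z_def using L V E2 dims by auto
  have WL: "W * L = C1" unfolding W_def using assoc_mult_mat[OF dims(4) Li L] ul(5) dims by simp
  have VL: "V * L = Ct" using ul by simp
  have W2: "W $$ (r,k) = - V $$ (r,k)" if "0 < r" "r < n" "k < n" for r k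
  proof -
    have "W $$ (r,k) = (\<Sum>m<n. C1 $$ (r,m) * Li $$ (m,k))" unfolding W_def by (rule mult_entry[OF dims(4) Li that(2,3)])
    also have "\<dots> = - (\<Sum>m<n. Ct $$ (r,m) * Li $$ (m,k))" using con(1) that by (simp add: sum_negf)
    also have "(\<Sum>m<n. Ct $$ (r,m) * Li $$ (m,k)) = V $$ (r,k)"
      unfolding V_def Li_def[symmetric] by (rule mult_entry[OF dims(2) Li that(2,3), symmetric])
    finally show ?thesis .
  qed
  have chain4: "E1 n * C1 * (Bt - B1) * E2n n * Ct * Bt = E1 n * (W * Z * Q)"
    unfolding WL[symmetric] VL[symmetric] Z_def Q_def
    using E1 W L Li V E2 dims by (simp add: massoc[of _ n] mult_n minus_n)
  have chain5: "E1 n * Ct * (Bt - B1) * E2n n * Ct * B1 = E1 n * (V * Z * R)"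
    unfolding VL[symmetric] Z_def R_def
    using E1 W L Li V E2 dims by (simp add: massoc[of _ n] mult_n minus_n)
  define D where "D = (\<lambda>i. if i = 0 then 0 else \<theta>t + \<theta>1 + \<kappa> (i+1))"
  have Vu: "\<And>i j. j < i \<Longrightarrow> i < n \<Longrightarrow> V $$ (i,j) = 0" and Vd: "\<And>i. i<n \<Longrightarrow> V $$ (i,i) \<noteq> 0"
    using ul by auto
  have Lu: "\<And>i j. i < j \<Longrightarrow> j < n \<Longrightarrow> L $$ (i,j) = 0" and Ld: "\<And>i. i < n \<Longrightarrow> L $$ (i,i) = 1"
    using ul by auto
  have BB: "Bt - B1 \<in> carrier_mat n n" by (rule minus_n[OF dims(1,3)])
  have N: "(Ct * (Bt - B1) * E2n n) $$ (i,k) = (if k = i then D i else 0)" if "0 < i" "i < n" "k < n" for i k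
  proof -
    have "(Ct * (Bt - B1) * E2n n) $$ (i,k) = (if k = 0 then 0 else (Ct * (Bt - B1)) $$ (i,k))"
      by (rule mult_E2_entry[OF mult_n[OF dims(2) BB] that(2,3)])
    also have "(Ct * (Bt - B1)) $$ (i,k) = (Ct * Bt + C1 * B1) $$ (i,k)"
    proof -
      have "(Ct * (Bt - B1)) $$ (i,k) = (Ct*Bt) $$ (i,k) - (Ct * B1) $$ (i,k)"
        using mult_minus_distrib_mat[OF dims(2,1,3)] dims that by simp
      also have "(Ct * B1) $$ (i,k) = - (C1 * B1) $$ (i,k)"
        using mult_entry[OF dims(2,3) that(2,3)] mult_entry[OF dims(4,3) that(2,3)] con(1) that
        by (simp add: sum_negf)
      finally show ?thesis using dims that by simp
    qed
    finally show ?thesis using con(3)[of i k] that by (auto simp: D_def)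
  qed
  have VZ: "(V * Z) $$ (i,j) = D i * V $$ (i,j)" if "0 < i" "i < n" "j < n" for i j
  proof -
    have M: "Ct * (Bt - B1) * E2n n \<in> carrier_mat n n" using dims E2 BB by (simp add: mult_n)
    have "V * Z = Ct * (Bt - B1) * E2n n * V" unfolding Z_def VL[symmetric]
      using V L E2 dims BB by (simp add: massoc[of _ n] mult_n)
    hence "(V * Z) $$ (i,j) = (\<Sum>k<n. (Ct * (Bt - B1) * E2n n) $$ (i,k) * V $$ (k,j))"
      using mult_entry[OF M V that(2,3)] by simp
    also have "\<dots> = (Ct * (Bt - B1) * E2n n) $$ (i,i) * V $$ (i,j)"
      by (rule sum_one, insert that N, auto)
    finally show ?thesis using N that by simp
  qed
  have Zl0: "Z $$ (i,j) = 0" if "0 < i" "i < n" "j < i" for i j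
    by (rule upper_solve[OF V Vu Vd Z, of 1], insert VZ Vu that, auto)
  have Zl: "Z $$ (i,j) = 0" if "i < n" "j < i" for i j
    using Zl0 that by auto
  have Zd: "Z $$ (i,i) = D i" if "i < n" for i
  proof (cases "i = 0")
    case True
    define M where "M = L * (Bt - B1) * E2n n"
    have M: "M \<in> carrier_mat n n" unfolding M_def using L BB E2 by (simp add: mult_n)
    have "Z $$ (0,0) = (\<Sum>k<n. M $$ (0,k) * V $$ (k,0))"
      unfolding Z_def M_def[symmetric] by (rule mult_entry[OF M V n0 n0])
    also have "\<dots> = M $$ (0,0) * V $$ (0,0)" by (rule sum_one, insert Vu n0, auto)
    also have "M $$ (0,0) = 0" unfolding M_def by (subst mult_E2_entry[OF mult_n[OF L BB] n0 n0], simp)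
    finally show ?thesis using True by (simp add: D_def)
  next
    case False
    have "(V * Z) $$ (i,i) = V $$ (i,i) * Z $$ (i,i)"
      by (rule upper_diag[OF V Vu Z that], insert Zl0 False, auto)
    thus ?thesis using VZ[of i i] False that Vd[OF that] by simp
  qed
  define T where "T = Q * V + R * W"
  have T: "T \<in> carrier_mat n n" unfolding T_def using Q V R W by simp
  have QR: "L * (Bt - B1) = Q - R" unfolding Q_def R_def by (rule mult_minus_distrib_mat[OF L dims(1,3)])
  have TZ: "T $$ (i,j) = Z $$ (i,j) + Q $$ (i,0) * V $$ (0,j) + R $$ (i,0) * W $$ (0,j)" if "i < n" "j < n" for i j
  proof -
    define M where "M = L * (Bt - B1) * E2n n"
    have M: "M \<in> carrier_mat n n" unfolding M_def using L BB E2 by (simp add: mult_n)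
    have Me: "M $$ (i,k) = (if k = 0 then 0 else Q $$ (i,k) - R $$ (i,k))" if "k < n" for k
      unfolding M_def using mult_E2_entry[OF mult_n[OF L BB] \<open>i < n\<close> that] QR Q R \<open>i < n\<close> that by simp
    have "Z $$ (i,j) = (\<Sum>k<n. M $$ (i,k) * V $$ (k,j))"
      unfolding Z_def M_def[symmetric] by (rule mult_entry[OF M V that])
    also have "\<dots> = M $$ (i,0) * V $$ (0,j) + (\<Sum>k\<in>{1..<n}. M $$ (i,k) * V $$ (k,j))"
      by (rule sum_split0[OF n0])
    also have "(\<Sum>k\<in>{1..<n}. M $$ (i,k) * V $$ (k,j)) = (\<Sum>k\<in>{1..<n}. Q $$ (i,k) * V $$ (k,j) - R $$ (i,k) * V $$ (k,j))"
      by (rule sum.cong, insert Me, auto simp: algebra_simps)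
    finally have z: "Z $$ (i,j) = (\<Sum>k\<in>{1..<n}. Q $$ (i,k) * V $$ (k,j)) - (\<Sum>k\<in>{1..<n}. R $$ (i,k) * V $$ (k,j))"
      using Me n0 by (simp add: sum_subtractf)
    have "T $$ (i,j) = (\<Sum>k<n. Q $$ (i,k) * V $$ (k,j)) + (\<Sum>k<n. R $$ (i,k) * W $$ (k,j))"
      unfolding T_def using mult_entry[OF Q V that] mult_entry[OF R W that] Q V R W that by simp
    also have "\<dots> = Q $$ (i,0) * V $$ (0,j) + (\<Sum>k\<in>{1..<n}. Q $$ (i,k) * V $$ (k,j))
        + (R $$ (i,0) * W $$ (0,j) + (\<Sum>k\<in>{1..<n}. R $$ (i,k) * W $$ (k,j)))"
      by (simp add: sum_split0[OF n0])
    also have "(\<Sum>k\<in>{1..<n}. R $$ (i,k) * W $$ (k,j)) = - (\<Sum>k\<in>{1..<n}. R $$ (i,k) * V $$ (k,j))"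
      by (simp add: sum_negf[symmetric], rule sum.cong, insert W2 that, auto)
    finally show ?thesis unfolding z by simp
  qed
  have TL: "T * L = L * (Bt * Ct + B1 * C1)"
  proof -
    have "T * L = Q * V * L + R * W * L" unfolding T_def
      by (rule add_mult_distrib_mat[OF mult_n[OF Q V] mult_n[OF R W] L])
    also have "Q * V * L = L * (Bt * Ct)" unfolding Q_def VL[symmetric]
      using L V dims by (simp add: massoc[of _ n] mult_n)
    also have "R * W * L = L * (B1 * C1)" unfolding R_def WL[symmetric]
      using L W dims by (simp add: massoc[of _ n] mult_n)
    finally show ?thesis using mult_add_distrib_mat[OF L mult_n[OF dims(1,2)] mult_n[OF dims(3,4)]] by simp
  qed
  have TLe: "(T * L) $$ (i,j) = - L $$ (i,j) * \<kappa> (n+j+1)" if "i < n" "j < n" for i j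
  proof -
    have K: "Bt * Ct + B1 * C1 \<in> carrier_mat n n" using dims by simp
    have "(T * L) $$ (i,j) = (\<Sum>k<n. L $$ (i,k) * (Bt * Ct + B1 * C1) $$ (k,j))"
      unfolding TL by (rule mult_entry[OF L K that])
    also have "\<dots> = L $$ (i,j) * (Bt * Ct + B1 * C1) $$ (j,j)"
      by (rule sum_one, insert con(2) that, auto)
    finally show ?thesis using con(2)[of j j] that by simp
  qed
  have Lt: "transpose_mat L \<in> carrier_mat n n" and Tt: "transpose_mat T \<in> carrier_mat n n" using L T by auto
  have LTt: "transpose_mat L * transpose_mat T = transpose_mat (T * L)" using transpose_mult[OF T L] by simp
  have Ltu: "\<And>i j. j < i \<Longrightarrow> i < n \<Longrightarrow> transpose_mat L $$ (i,j) = 0" using Lu L by auto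
  have Ltd: "\<And>i. 0 \<le> i \<Longrightarrow> i < n \<Longrightarrow> transpose_mat L $$ (i,i) \<noteq> 0" using Ld L by auto
  have Tup: "T $$ (i,j) = 0" if "i < j" "j < n" for i j
  proof -
    have "transpose_mat T $$ (j,i) = 0"
      by (rule upper_solve[OF Lt Ltu Ltd Tt, of 0], insert that TLe Lu L T, auto simp: LTt)
    thus ?thesis using that T by auto
  qed
  have Tdg: "T $$ (i,i) = - \<kappa> (n+i+1)" if "i < n" for i
  proof -
    have "(transpose_mat L * transpose_mat T) $$ (i,i) = transpose_mat L $$ (i,i) * transpose_mat T $$ (i,i)"
      by (rule upper_diag[OF Lt Ltu Tt that], insert Tup T that, auto)
    thus ?thesis unfolding LTt using TLe[OF that that] Ld[OF that] that L T by auto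
  qed
  define u where "u = (\<lambda>j. V $$ (0,j))"
  define w where "w = (\<lambda>j. W $$ (0,j))"
  define p where "p = (\<lambda>j. Q $$ (j,0))"
  define y where "y = (\<lambda>j. R $$ (j,0))"
  have Zf: "Z $$ (i,j) = (if j < i then 0 else if j = i then D i else - p i * u j - y i * w j)"
    if "i < n" "j < n" for i j
    using Zl[of i j] Zd[of i] TZ[OF that] Tup[of i j] that unfolding u_def w_def p_def y_def
    by (auto simp: algebra_simps eq_neg_iff_add_eq_0)
  have Zdg: "D i + p i * u i + y i * w i = - \<kappa> (n+i+1)" if "i < n" for i
    using TZ[OF that that] Tdg[OF that] Zd[OF that] unfolding u_def w_def p_def y_def by (simp add: algebra_simps)
  have mu_d: "\<mu> = mu n t Bt Ct C1" and lm_d: "lm = lam n t Ct C1"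
    and be_d: "\<beta> = (\<lambda>i. if i = 1 then - \<kappa> (n+1) else - \<theta>t - \<theta>1 - \<kappa> i - \<kappa> (n+i))"
    using assms(18,19,20) by simp_all
  have pt: "\<And>m. (-1::complex)^m * (-1)^m = 1" by (simp add: power_mult_distrib[symmetric])
  have key: "\<mu> (Suc i) = w i * p i / t \<and> lm (Suc i) = - t * u i / w i \<and> w i \<noteq> 0" if i: "i < n" for i
  proof -
    let ?m = "n - Suc i"
    define \<delta> where "\<delta> = det (sm V [Suc i..<n] [Suc i..<n])"
    have mJ: "minor Ct [Suc i+1..<n+1] [Suc i+1..<n+1] = \<delta>"
      unfolding minor_sm upt_map \<delta>_def by (rule minor_tail[OF V L VL Lu Ld Vu])
    have dnz: "\<delta> \<noteq> 0" using nz(1)[of "Suc i"] i mJ by simp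
    have mC1: "minor C1 (1 # [Suc i+1..<n+1]) [Suc i..<n+1] = w i * (-1) ^ ?m * \<delta>"
    proof -
      have "minor C1 (1 # [Suc i+1..<n+1]) [Suc i..<n+1] = det (sm (W * L) (0 # [Suc i..<n]) [i..<n])"
        unfolding minor_sm list.map upt_map upt_map2 WL by simp
      also have "\<dots> = W $$ (0,i) * (-1) ^ ?m * \<delta>" unfolding \<delta>_def
        by (rule minor_head[OF W V L Lu Ld Vu i], insert W2, auto)
      finally show ?thesis unfolding w_def .
    qed
    have mCt: "minor Ct (1 # [Suc i+1..<n+1]) [Suc i..<n+1] = u i * \<delta>"
    proof -
      have "minor Ct (1 # [Suc i+1..<n+1]) [Suc i..<n+1] = det (sm (V * L) (0 # [Suc i..<n]) [i..<n])"
        unfolding minor_sm list.map upt_map upt_map2 VL by simp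
      also have "\<dots> = V $$ (0,i) * 1 ^ ?m * \<delta>" unfolding \<delta>_def
        by (rule minor_head[OF V V L Lu Ld Vu i], auto)
      finally show ?thesis unfolding u_def by simp
    qed
    have wnz: "w i \<noteq> 0" using nz(3)[of "Suc i"] i mC1 by auto
    have mI: "minor Ct [Suc i..<n+1] [Suc i..<n+1] = det (AI Ct n i)"
      unfolding minor_sm upt_map2 AI_def ..
    have mk: "minor Ct [Suc i..<n+1] (k # [Suc i+1..<n+1]) / minor Ct [Suc i..<n+1] [Suc i..<n+1]
        = L $$ (i, k - 1)" if "1 \<le> k" "k \<le> Suc i" for k
    proof -
      have "minor Ct [Suc i..<n+1] (k # [Suc i+1..<n+1]) = det (sm Ct [i..<n] ((k-1) # [Suc i..<n]))"
        unfolding minor_sm list.map upt_map upt_map2 ..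
      thus ?thesis unfolding mI L_def Lam_def using that i by simp
    qed
    have sumk: "(\<Sum>k=1..Suc i. minor Ct [Suc i..<n+1] (k # [Suc i+1..<n+1]) / minor Ct [Suc i..<n+1] [Suc i..<n+1]
                    * Bt $$ (k-1, 0)) = p i"
    proof -
      have "(\<Sum>k=1..Suc i. minor Ct [Suc i..<n+1] (k # [Suc i+1..<n+1]) / minor Ct [Suc i..<n+1] [Suc i..<n+1]
                    * Bt $$ (k-1, 0)) = (\<Sum>k=1..Suc i. L $$ (i, k-1) * Bt $$ (k-1, 0))"
        by (rule sum.cong, insert mk, auto)
      also have "\<dots> = (\<Sum>k<Suc i. L $$ (i, k) * Bt $$ (k, 0))" unfolding s1 by simp
      also have "\<dots> = (\<Sum>k<n. L $$ (i, k) * Bt $$ (k, 0))"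
        by (rule sum.mono_neutral_left, insert i Lu, auto)
      also have "\<dots> = p i" unfolding p_def Q_def using mult_entry[OF L dims(1) i n0] by simp
      finally show ?thesis .
    qed
    have "\<mu> (Suc i) = (-1)^?m * inverse t * (w i * (-1) ^ ?m * \<delta>) / \<delta> * p i"
      unfolding mu_d mu_def mC1 mJ sumk by simp
    also have "\<dots> = w i * p i / t" using dnz pt[of ?m] by (simp add: field_simps)
    finally have 1: "\<mu> (Suc i) = w i * p i / t" .
    have "lm (Suc i) = (-1)^(?m+1) * t * (u i * \<delta>) / (w i * (-1) ^ ?m * \<delta>)"
      unfolding lm_d lam_def mC1 mCt by simp
    also have "\<dots> = - t * u i / w i" using dnz wnz pt[of ?m] by (simp add: field_simps)
    finally show ?thesis using 1 wnz by simp
  qed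
  have mu_e: "\<mu> (Suc i) = w i * p i / t" and lm_e: "lm (Suc i) = - t * u i / w i" and w_nz: "w i \<noteq> 0"
    if "i < n" for i using key[OF that] by auto
  have lmmu: "lm (Suc i) * \<mu> (Suc i) = - (u i * p i)" if "i < n" for i
    unfolding mu_e[OF that] lm_e[OF that] using w_nz[OF that] t0 by (simp add: field_simps)
  have hpw: "u i * p i + w i * y i = - \<kappa> (n+i+1) - D i" if "i < n" for i
  proof -
    have "u i * p i + w i * y i = (D i + p i * u i + y i * w i) - D i" by (simp add: algebra_simps)
    also have "\<dots> = - \<kappa> (n+i+1) - D i" using Zdg[OF that] by simp
    finally show ?thesis .
  qed
  have beq: "\<beta> (Suc i) = u i * p i + w i * y i" if "i < n" for i
    unfolding hpw[OF that] be_d D_def by (cases "i = 0", auto simp: algebra_simps)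
  have lmb: "lm (Suc i) * \<mu> (Suc i) + \<beta> (Suc i) = w i * y i" if "i < n" for i
    using lmmu[OF that] beq[OF that] by simp
  have Dk: "- \<beta> (Suc i) - \<kappa> (n + Suc i) = D i" if "i < n" for i
    unfolding beq[OF that] hpw[OF that] by simp
  have tmu: "t * \<mu> (Suc i) = w i * p i" if "i < n" for i using mu_e[OF that] t0 by simp
  have tlm: "- (1/t) * (lm (Suc i) * (lm (Suc i) * \<mu> (Suc i) + \<beta> (Suc i))) = u i * y i" if "i < n" for i
    unfolding lmb[OF that] unfolding lm_e[OF that] using w_nz[OF that] t0 by (simp add: field_simps)
  have e00: "(X * Y) $$ (0,0) = (\<Sum>k<n. X $$ (0,k) * Y $$ (k,0))" if "X \<in> carrier_mat n n" "Y \<in> carrier_mat n n" for X Y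
    by (rule mult_entry[OF that n0 n0])
  have tr: "mtrace (E1 n * A * B) = (A * B) $$ (0,0)" if "A \<in> carrier_mat n n" "B \<in> carrier_mat n n" for A B
    using trace_E1[OF mult_n[OF that] n0] massoc[OF E1 that] by simp
  have g1: "mtrace (E1 n * Ct * Bt) = - (\<Sum>i=1..n. lm i * \<mu> i)"
  proof -
    have "Ct * Bt = V * Q" unfolding VL[symmetric] Q_def using V L dims by (simp add: massoc)
    hence "mtrace (E1 n * Ct * Bt) = (\<Sum>k<n. u k * p k)" using tr[OF dims(2,1)] e00[OF V Q] by (simp add: u_def p_def)
    also have "\<dots> = - (\<Sum>i<n. lm (Suc i) * \<mu> (Suc i))" using lmmu by (simp add: sum_negf[symmetric])
    finally show ?thesis unfolding s1 .
  qed
  have g2: "mtrace (E1 n * C1 * Bt) = t * (\<Sum>i=1..n. \<mu> i)"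
  proof -
    have "C1 * Bt = W * Q" unfolding WL[symmetric] Q_def using W L dims by (simp add: massoc)
    hence "mtrace (E1 n * C1 * Bt) = (\<Sum>k<n. w k * p k)" using tr[OF dims(4,1)] e00[OF W Q] by (simp add: w_def p_def)
    also have "\<dots> = (\<Sum>i<n. t * \<mu> (Suc i))" using tmu by simp
    finally show ?thesis unfolding s1 by (simp add: sum_distrib_left)
  qed
  have g3: "mtrace (E1 n * Ct * B1) = - (1/t) * (\<Sum>i=1..n. lm i * (lm i * \<mu> i + \<beta> i))"
  proof -
    have "Ct * B1 = V * R" unfolding VL[symmetric] R_def using V L dims by (simp add: massoc)
    hence "mtrace (E1 n * Ct * B1) = (\<Sum>k<n. u k * y k)" using tr[OF dims(2,3)] e00[OF V R] by (simp add: u_def y_def)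
    also have "\<dots> = (\<Sum>i<n. - (1/t) * (lm (Suc i) * (lm (Suc i) * \<mu> (Suc i) + \<beta> (Suc i))))"
      using tlm by simp
    finally show ?thesis unfolding s1 by (simp add: sum_distrib_left)
  qed
  have tri: "(X * Z * Y) $$ (0,0) = (\<Sum>i<n. \<Sum>j<n. X $$ (0,i) * Z $$ (i,j) * Y $$ (j,0))"
    if "X \<in> carrier_mat n n" "Y \<in> carrier_mat n n" for X Y
  proof -
    have "(X * Z * Y) $$ (0,0) = (\<Sum>j<n. (X * Z) $$ (0,j) * Y $$ (j,0))"
      by (rule e00[OF mult_n[OF that(1) Z] that(2)])
    also have "\<dots> = (\<Sum>j<n. \<Sum>i<n. X $$ (0,i) * Z $$ (i,j) * Y $$ (j,0))"
      by (rule sum.cong, simp, subst mult_entry[OF that(1) Z n0], auto simp: sum_distrib_right)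
    finally show ?thesis by (subst sum.swap)
  qed
  note FS = final_sums[of n "\<lambda>i j. Z $$ (i,j)" D p u y w, OF Zf]
  have g4: "mtrace (E1 n * C1 * (Bt - B1) * E2n n * Ct * Bt)
           = t * (\<Sum>i=1..n. \<mu> i * (- (\<Sum>j=1..<i. lm j * \<mu> j + \<beta> j) - \<beta> i - \<kappa> (n+i)
                                    + (\<Sum>j=i+1..n. lm j * \<mu> j)))"
  proof -
    have "mtrace (E1 n * C1 * (Bt - B1) * E2n n * Ct * Bt) = (\<Sum>i<n. \<Sum>j<n. w i * Z $$ (i,j) * p j)"
      unfolding chain4 trace_E1[OF mult_n[OF mult_n[OF W Z] Q] n0] tri[OF W Q] w_def p_def ..
    also have "\<dots> = (\<Sum>i<n. w i * p i * (- (\<Sum>j<i. w j * y j) + D i - (\<Sum>j\<in>{Suc i..<n}. u j * p j)))"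
      by (rule FS(1))
    also have "\<dots> = (\<Sum>i<n. t * (\<mu> (Suc i) * (- (\<Sum>j<i. lm (Suc j) * \<mu> (Suc j) + \<beta> (Suc j))
            - \<beta> (Suc i) - \<kappa> (n + Suc i) + (\<Sum>j\<in>{Suc i..<n}. lm (Suc j) * \<mu> (Suc j)))))"
    proof (rule sum.cong[OF refl])
      fix i assume i: "i \<in> {..<n}"
      have a: "(\<Sum>j<i. lm (Suc j) * \<mu> (Suc j) + \<beta> (Suc j)) = (\<Sum>j<i. w j * y j)"
        using lmb i by (intro sum.cong) auto
      have b: "(\<Sum>j\<in>{Suc i..<n}. lm (Suc j) * \<mu> (Suc j)) = - (\<Sum>j\<in>{Suc i..<n}. u j * p j)"
        unfolding sum_negf[symmetric] using lmmu by (intro sum.cong) auto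
      have c: "- \<beta> (Suc i) - \<kappa> (n + Suc i) = D i" using Dk i by simp
      have "t * (\<mu> (Suc i) * (- (\<Sum>j<i. lm (Suc j) * \<mu> (Suc j) + \<beta> (Suc j))
            - \<beta> (Suc i) - \<kappa> (n + Suc i) + (\<Sum>j\<in>{Suc i..<n}. lm (Suc j) * \<mu> (Suc j))))
          = (t * \<mu> (Suc i)) * (- (\<Sum>j<i. w j * y j) + (- \<beta> (Suc i) - \<kappa> (n + Suc i))
             - (\<Sum>j\<in>{Suc i..<n}. u j * p j))"
        unfolding a b by (simp add: algebra_simps)
      also have "\<dots> = w i * p i * (- (\<Sum>j<i. w j * y j) + D i - (\<Sum>j\<in>{Suc i..<n}. u j * p j))"
        unfolding c tmu[OF i[simplified]] ..
      finally show "w i * p i * (- (\<Sum>j<i. w j * y j) + D i - (\<Sum>j\<in>{Suc i..<n}. u j * p j))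
        = t * (\<mu> (Suc i) * (- (\<Sum>j<i. lm (Suc j) * \<mu> (Suc j) + \<beta> (Suc j))
            - \<beta> (Suc i) - \<kappa> (n + Suc i) + (\<Sum>j\<in>{Suc i..<n}. lm (Suc j) * \<mu> (Suc j))))" by simp
    qed
    finally show ?thesis unfolding s1 s2 s3[OF n0] sum_distrib_left .
  qed
  have g5: "mtrace (E1 n * Ct * (Bt - B1) * E2n n * Ct * B1)
           = - (1/t) * (\<Sum>i=1..n. lm i * (lm i * \<mu> i + \<beta> i)
                 * ((\<Sum>j=1..<i. lm j * \<mu> j) - \<beta> i - \<kappa> (n+i)
                    - (\<Sum>j=i+1..n. lm j * \<mu> j + \<beta> j)))"
  proof -
    have "mtrace (E1 n * Ct * (Bt - B1) * E2n n * Ct * B1) = (\<Sum>i<n. \<Sum>j<n. u i * Z $$ (i,j) * y j)"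
      unfolding chain5 trace_E1[OF mult_n[OF mult_n[OF V Z] R] n0] tri[OF V R] u_def y_def ..
    also have "\<dots> = (\<Sum>i<n. u i * y i * (- (\<Sum>j<i. u j * p j) + D i - (\<Sum>j\<in>{Suc i..<n}. w j * y j)))"
      by (rule FS(2))
    also have "\<dots> = (\<Sum>i<n. - (1/t) * (lm (Suc i) * (lm (Suc i) * \<mu> (Suc i) + \<beta> (Suc i))
                 * ((\<Sum>j<i. lm (Suc j) * \<mu> (Suc j)) - \<beta> (Suc i) - \<kappa> (n + Suc i)
                    - (\<Sum>j\<in>{Suc i..<n}. lm (Suc j) * \<mu> (Suc j) + \<beta> (Suc j)))))"
    proof (rule sum.cong[OF refl])
      fix i assume i: "i \<in> {..<n}"
      have a: "(\<Sum>j<i. lm (Suc j) * \<mu> (Suc j)) = - (\<Sum>j<i. u j * p j)"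
        unfolding sum_negf[symmetric] using lmmu i by (intro sum.cong) auto
      have b: "(\<Sum>j\<in>{Suc i..<n}. lm (Suc j) * \<mu> (Suc j) + \<beta> (Suc j)) = (\<Sum>j\<in>{Suc i..<n}. w j * y j)"
        using lmb by (intro sum.cong) auto
      have c: "- \<beta> (Suc i) - \<kappa> (n + Suc i) = D i" using Dk i by simp
      have "- (1/t) * (lm (Suc i) * (lm (Suc i) * \<mu> (Suc i) + \<beta> (Suc i))
                 * ((\<Sum>j<i. lm (Suc j) * \<mu> (Suc j)) - \<beta> (Suc i) - \<kappa> (n + Suc i)
                    - (\<Sum>j\<in>{Suc i..<n}. lm (Suc j) * \<mu> (Suc j) + \<beta> (Suc j))))
          = (- (1/t) * (lm (Suc i) * (lm (Suc i) * \<mu> (Suc i) + \<beta> (Suc i))))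
             * (- (\<Sum>j<i. u j * p j) + (- \<beta> (Suc i) - \<kappa> (n + Suc i)) - (\<Sum>j\<in>{Suc i..<n}. w j * y j))"
        unfolding a b by (simp add: algebra_simps)
      also have "\<dots> = u i * y i * (- (\<Sum>j<i. u j * p j) + D i - (\<Sum>j\<in>{Suc i..<n}. w j * y j))"
        unfolding c tlm[OF i[simplified]] ..
      finally show "u i * y i * (- (\<Sum>j<i. u j * p j) + D i - (\<Sum>j\<in>{Suc i..<n}. w j * y j))
        = - (1/t) * (lm (Suc i) * (lm (Suc i) * \<mu> (Suc i) + \<beta> (Suc i))
                 * ((\<Sum>j<i. lm (Suc j) * \<mu> (Suc j)) - \<beta> (Suc i) - \<kappa> (n + Suc i)
                    - (\<Sum>j\<in>{Suc i..<n}. lm (Suc j) * \<mu> (Suc j) + \<beta> (Suc j))))" by simp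
    qed
    finally show ?thesis unfolding s1 s2 s3[OF n0] sum_distrib_left .
  qed
  show ?thesis using g1 g2 g3 g4 g5 by blast
qed


end
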